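(* Assume Assumption (S) and the upwind condition $A_{i,0}=0$ for all $i$. Let $\mathbb D^*$ be defined by $(\mathbb D^*v,\omega)_*=\tau\mathcal H^*(v,\omega)$ for all $\omega\in\mathbb V^k$, and let $R_s^*(v)=\sum_{\kappa=0}^s\alpha_\kappa(\mathbb D^* )^\kappa v$ with $\alpha_\kappa$ the coefficients of the polynomial $P_s(z)=\sum_{\kappa=0}^s\alpha_\kappa z^\kappa$ defined by $P_0(z)=1$, $P_{\ell+1}(z)=\sum_{0\le\kappa\le\ell}(c_{\ell\kappa}+d_{\ell\kappa}z)P_\kappa(z)$. Then there exist constants $\{b_\kappa\}$ and $\{b_{\kappa,\kappa_0}\}$ with $b_{\kappa,\kappa_0}=b_{\kappa_0,\kappa}$ such that for every $v\in\mathbb V^k$, $$\|R_s^*(v)\|_*^2=\|v\|_*^2+\sum_{\kappa=1}^sb_\kappa\|(\mathbb D^* )^\kappa v\|_*^2-\tau\sum_{0\le\kappa,\kappa_0<s}b_{\kappa,\kappa_0}\langle[\![(\mathbb D^* )^\kappa v]\!],[\![(\mathbb D^* )^{\kappa_0}v]\!]\rangle.$$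
   Context: Let $\Omega=[a,b]$ be partitioned into finitely many cells $I_i=[x_{i-\frac12},x_{i+\frac12}]$ with sizes $h_i$; indices periodic. $(\cdot,\cdot)$: $L^2(\Omega)$ inner product; $(\cdot,\cdot)_{I_i}$: $L^2(I_i)$ inner product. $\mathbb V^k=\{v\in L^2(\Omega): v|_{I_i}\in\mathbb P^k(I_i)\ \forall i\}$. Each $I_i$ has subdivision points $x_{i-\frac12}=x_{i,0}<x_{i,1}<\dots<x_{i,k}<x_{i,k+1}=x_{i+\frac12}$, control volumes $I_{i,j}=[x_{i,j},x_{i,j+1}]$; $\mathbb V^{k,*}$ = functions constant on each $I_{i,j}$. Quadrature on $I_i$: $Q_i^k(v)=\sum_{j=0}^{k+1}A_{i,j}v(x_{i,j})$ (applied to restrictions to $I_i$), error $R_i^k(v)=\int_{I_i}v\,dx-Q_i^k(v)$, exact on $\mathbb P^{k-1}(I_i)$. $M^*:\mathbb V^k\to\mathbb V^{k,*}$: for $v=\omega|_{I_i}$, $(M^*\omega)|_{I_{i,0}}=v(x_{i-\frac12})+A_{i,0}v'(x_{i-\frac12})$, $(M^*\omega)|_{I_{i,j}}-(M^*\omega)|_{I_{i,j-1}}=A_{i,j}v'(x_{i,j})$, $j=1,\dots,k$. $L_{i,\ell}$: shifted Legendre polynomial of degree $\ell$ on $I_i$, $L_{i,\ell}(x_{i+\frac12})=1$, $(L_{i,\ell},L_{i,m})_{I_i}=\delta_{\ell m}h_i/(2\ell+1)$. Assumption (S): $k\ge1$ and for every $i$, $R_i^k$ vanishes on $\mathbb P^{2k-1}(I_i)$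 and $\frac{h_i}{2k-1}-Q_i^k(L_{i,k+1}L_{i,k-1})>0$; then $(v,\omega)_*:=(v,M^*\omega)$ is an inner product on $\mathbb V^k$, $\|v\|_*=\sqrt{(v,v)_*}$. Jumps $[\![v]\!]_{i+\frac12}=v(x_{i+\frac12}^+)-v(x_{i+\frac12}^-)$, $\langle[\![v]\!],[\![\omega]\!]\rangle=\sum_i[\![v]\!]_{i+\frac12}[\![\omega]\!]_{i+\frac12}$. With $A_{i,0}=0$, for $v,\omega\in\mathbb V^k$: $\mathcal H^*(v,\omega)=\beta\big(\sum_iQ_i^k(v\omega_x)+\sum_iv(x_{i+\frac12}^-)[\![\omega]\!]_{i+\frac12}\big)$, $\beta>0$. $c_{\ell\kappa},d_{\ell\kappa}$ ($0\le\kappa\le\ell\le s-1$, $\sum_\kappa c_{\ell\kappa}=1$) are the coefficients of an explicit $s$-stage Runge–Kutta method, $\tau>0$ the time step. *)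

theory Defs
  imports "HOL-Analysis.Analysis" "HOL-Computational_Algebra.Polynomial"
begin

(* Mesh: N cells I_i = [xh i, xh (Suc i)], i < N (indices mod N for periodicity).
   Subdivision points xs i j, j = 0..k+1, with xs i 0 = xh i, xs i (k+1) = xh (Suc i).
   An element of V^k is represented as v :: nat => real poly, v i = v restricted to I_i. *)

definition inV :: "nat \<Rightarrow> nat \<Rightarrow> (nat \<Rightarrow> real poly) \<Rightarrow> bool" where
  "inV k N v \<longleftrightarrow> (\<forall>i<N. degree (v i) \<le> k)"

definition quad :: "nat \<Rightarrow> (nat \<Rightarrow> nat \<Rightarrow> real) \<Rightarrow> (nat \<Rightarrow> nat \<Rightarrow> real) \<Rightarrow> nat
                   \<Rightarrow> (real \<Rightarrow> real) \<Rightarrow> real" where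
  "quad k A xs i f = (\<Sum>j\<le>Suc k. A i j * f (xs i j))"

(* value of M^* w on the control volume I_{i,j}, j = 0..k *)
definition mstar :: "nat \<Rightarrow> (nat \<Rightarrow> nat \<Rightarrow> real) \<Rightarrow> (nat \<Rightarrow> nat \<Rightarrow> real) \<Rightarrow> (nat \<Rightarrow> real)
                    \<Rightarrow> (nat \<Rightarrow> real poly) \<Rightarrow> nat \<Rightarrow> nat \<Rightarrow> real" where
  "mstar k A xs xh w i j =
     poly (w i) (xh i) + (\<Sum>l\<le>j. A i l * poly (pderiv (w i)) (xs i l))"

(* (v, w)_* = (v, M^* w) *)
definition ip_star :: "nat \<Rightarrow> nat \<Rightarrow> (nat \<Rightarrow> nat \<Rightarrow> real) \<Rightarrow> (nat \<Rightarrow> nat \<Rightarrow> real) \<Rightarrow> (nat \<Rightarrow> real)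
                      \<Rightarrow> (nat \<Rightarrow> real poly) \<Rightarrow> (nat \<Rightarrow> real poly) \<Rightarrow> real" where
  "ip_star N k A xs xh v w =
     (\<Sum>i<N. \<Sum>j\<le>k. mstar k A xs xh w i j * integral {xs i j..xs i (Suc j)} (\<lambda>x. poly (v i) x))"

definition jump :: "nat \<Rightarrow> (nat \<Rightarrow> real) \<Rightarrow> (nat \<Rightarrow> real poly) \<Rightarrow> nat \<Rightarrow> real" where
  "jump N xh v i = poly (v (Suc i mod N)) (xh (Suc i mod N)) - poly (v i) (xh (Suc i))"

definition jump_ip :: "nat \<Rightarrow> (nat \<Rightarrow> real) \<Rightarrow> (nat \<Rightarrow> real poly) \<Rightarrow> (nat \<Rightarrow> real poly) \<Rightarrow> real" where
  "jump_ip N xh v w = (\<Sum>i<N. jump N xh v i * jump N xh w i)"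

(* H^*(v,w) with A_{i,0} = 0 *)
definition Hstar :: "nat \<Rightarrow> nat \<Rightarrow> (nat \<Rightarrow> nat \<Rightarrow> real) \<Rightarrow> (nat \<Rightarrow> nat \<Rightarrow> real) \<Rightarrow> (nat \<Rightarrow> real)
                    \<Rightarrow> real \<Rightarrow> (nat \<Rightarrow> real poly) \<Rightarrow> (nat \<Rightarrow> real poly) \<Rightarrow> real" where
  "Hstar N k A xs xh \<beta> v w =
     \<beta> * ((\<Sum>i<N. quad k A xs i (\<lambda>x. poly (v i) x * poly (pderiv (w i)) x))
          + (\<Sum>i<N. poly (v i) (xh (Suc i)) * jump N xh w i))"

fun legendre :: "nat \<Rightarrow> real poly" where
  "legendre 0 = 1"
| "legendre (Suc 0) = [:0, 1:]"
| "legendre (Suc (Suc n)) =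
     smult (1 / (real n + 2))
       (smult (2 * real n + 3) ([:0, 1:] * legendre (Suc n)) - smult (real n + 1) (legendre n))"

definition shifted_legendre :: "real \<Rightarrow> real \<Rightarrow> nat \<Rightarrow> real \<Rightarrow> real" where
  "shifted_legendre xl xr l x = poly (legendre l) ((2 * x - xl - xr) / (xr - xl))"

primrec rk_polys :: "(nat \<Rightarrow> nat \<Rightarrow> real) \<Rightarrow> (nat \<Rightarrow> nat \<Rightarrow> real) \<Rightarrow> nat \<Rightarrow> real poly list" where
  "rk_polys c d 0 = [1]"
| "rk_polys c d (Suc l) = rk_polys c d l @
     [\<Sum>\<kappa>\<le>l. [:c l \<kappa>, d l \<kappa>:] * (rk_polys c d l ! \<kappa>)]"

definition rk_poly :: "(nat \<Rightarrow> nat \<Rightarrow> real) \<Rightarrow> (nat \<Rightarrow> nat \<Rightarrow> real) \<Rightarrow> nat \<Rightarrow> real poly" where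
  "rk_poly c d n = rk_polys c d n ! n"

end

theory Submission
  imports Defs
begin

definition pint :: "real poly \<Rightarrow> real poly" where
  "pint p = (\<Sum>n\<le>degree p. monom (coeff p n / real (Suc n)) (Suc n))"

lemma pderiv_sum': "pderiv (sum f A) = (\<Sum>x\<in>A. pderiv (f x))"
  by (induction A rule: infinite_finite_induct) (auto simp: pderiv_add)

lemma pderiv_pint: "pderiv (pint p) = p"
proof -
  have "pderiv (pint p) = (\<Sum>n\<le>degree p. monom (coeff p n) n)"
    unfolding pint_def by (simp add: pderiv_sum' pderiv_monom del: of_nat_Suc)
  also have "\<dots> = p" by (rule poly_as_sum_of_monoms)
  finally show ?thesis .
qed

lemma coeff_pint_Suc: "coeff (pint p) (Suc m) = coeff p m / real (Suc m)"
proof -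
  have "coeff (pint p) (Suc m) = (\<Sum>n\<le>degree p. if n = m then coeff p n / real (Suc n) else 0)"
    unfolding pint_def coeff_sum by (intro sum.cong) (auto simp: coeff_monom)
  also have "\<dots> = coeff p m / real (Suc m)"
    by (cases "m \<le> degree p") (auto simp: coeff_eq_0)
  finally show ?thesis .
qed

lemma degree_pint: "degree (pint p) \<le> Suc (degree p)"
  unfolding pint_def
  by (rule degree_sum_le) (auto intro: order.trans[OF degree_monom_le])

lemma ftc_poly:
  fixes P :: "real poly"
  assumes "a \<le> b"
  shows "integral {a..b} (\<lambda>x. poly (pderiv P) x) = poly P b - poly P a"
proof -
  have "((\<lambda>x. poly (pderiv P) x) has_integral (poly P b - poly P a)) {a..b}"
  proof (rule fundamental_theorem_of_calculus[OF assms])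
    fix x assume "x \<in> {a..b}"
    have "((\<lambda>x. poly P x) has_real_derivative poly (pderiv P) x) (at x within {a..b})"
      by (rule DERIV_subset[OF poly_DERIV]) simp
    then show "((\<lambda>x. poly P x) has_vector_derivative poly (pderiv P) x) (at x within {a..b})"
      by (simp add: has_real_derivative_iff_has_vector_derivative)
  qed
  then show ?thesis by (rule integral_unique)
qed

lemma ftc_pint:
  assumes "a \<le> b"
  shows "integral {a..b} (\<lambda>x. poly p x) = poly (pint p) b - poly (pint p) a"
  using ftc_poly[OF assms, of "pint p"] by (simp add: pderiv_pint)

lemma coeff_mult_bound:
  fixes f g :: "'a::idom poly"
  assumes "degree f \<le> m" "degree g \<le> n"
  shows "coeff (f * g) (m + n) = coeff f m * coeff g n"
proof (cases "degree f = m \<and> degree g = n")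
  case True then show ?thesis using coeff_mult_degree_sum[of f g] by simp
next
  case False
  then have "coeff f m = 0 \<or> coeff g n = 0" using assms by (auto intro!: coeff_eq_0)
  moreover have "degree (f * g) < m + n"
    using False assms degree_mult_le[of f g] by linarith
  ultimately show ?thesis by (auto simp: coeff_eq_0)
qed

lemma degree_drop:
  fixes X :: "real poly"
  assumes "degree X \<le> Suc n" "coeff X (Suc n) = 0"
  shows "degree X \<le> n"
proof (rule ccontr)
  assume "\<not> degree X \<le> n"
  then have "degree X = Suc n" using assms by simp
  then have "X = 0" using assms(2) by (metis leading_coeff_0_iff)
  then show False using \<open>degree X = Suc n\<close> by simp
qed

lemma telescope:
  fixes c :: real
  shows "(\<Sum>j\<le>n. (c + (\<Sum>l\<le>j. a l)) * (g (Suc j) - g j))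
       = c * (g (Suc n) - g 0) + (\<Sum>l\<le>n. a l * (g (Suc n) - g l))"
proof (induction n)
  case 0 then show ?case by (simp add: algebra_simps)
next
  case (Suc n)
  then show ?case
    by (simp add: algebra_simps sum.distrib sum_distrib_left sum_distrib_right sum_subtractf)
qed

lemma sum_mod_shift:
  assumes "N \<ge> 1"
  shows "(\<Sum>i<N. f (Suc i mod N)) = (\<Sum>i<N. (f i :: real))"
proof -
  obtain M where N: "N = Suc M" using assms by (cases N) auto
  have "(\<Sum>i<Suc M. f (Suc i mod Suc M)) = (\<Sum>i<M. f (Suc i mod Suc M)) + f 0"
    by (simp add: sum.lessThan_Suc)
  also have "(\<Sum>i<M. f (Suc i mod Suc M)) = (\<Sum>i<M. f (Suc i))"
    by (intro sum.cong) auto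
  also have "\<dots> + f 0 = (\<Sum>i<Suc M. f i)"
    by (subst sum.lessThan_Suc_shift) simp
  finally show ?thesis using N by simp
qed

lemma cell_value:
  fixes x Aw :: "nat \<Rightarrow> real" and p q :: "real poly"
  assumes mono: "\<forall>j\<le>k. x j \<le> x (Suc j)"
  shows "(\<Sum>j\<le>k. (poly q (x 0) + (\<Sum>l\<le>j. Aw l * poly (pderiv q) (x l))) * integral {x j..x (Suc j)} (\<lambda>t. poly p t))
    = poly q (x 0) * poly ([:poly (pint p) (x (Suc k)):] - pint p) (x 0)
      + (\<Sum>l\<le>Suc k. Aw l * poly (pderiv q * ([:poly (pint p) (x (Suc k)):] - pint p)) (x l))"
proof -
  have "(\<Sum>j\<le>k. (poly q (x 0) + (\<Sum>l\<le>j. Aw l * poly (pderiv q) (x l))) * integral {x j..x (Suc j)} (\<lambda>t. poly p t))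
      = (\<Sum>j\<le>k. (poly q (x 0) + (\<Sum>l\<le>j. Aw l * poly (pderiv q) (x l))) * (poly (pint p) (x (Suc j)) - poly (pint p) (x j)))"
    using mono by (intro sum.cong refl) (simp add: ftc_pint)
  also have "\<dots> = poly q (x 0) * (poly (pint p) (x (Suc k)) - poly (pint p) (x 0))
        + (\<Sum>l\<le>k. Aw l * poly (pderiv q) (x l) * (poly (pint p) (x (Suc k)) - poly (pint p) (x l)))"
    by (rule telescope)
  also have "\<dots> = poly q (x 0) * poly ([:poly (pint p) (x (Suc k)):] - pint p) (x 0)
      + (\<Sum>l\<le>Suc k. Aw l * poly (pderiv q * ([:poly (pint p) (x (Suc k)):] - pint p)) (x l))"
    by (simp add: algebra_simps)
  finally show ?thesis .
qed

lemma cell_sym: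
  fixes x Aw :: "nat \<Rightarrow> real" and p q :: "real poly"
  assumes mono: "\<forall>j\<le>k. x j \<le> x (Suc j)"
    and k1: "k \<ge> 1" and dp: "degree p \<le> k" and dq: "degree q \<le> k"
    and exact: "\<forall>r :: real poly. degree r \<le> 2 * k - 1 \<longrightarrow>
        integral {x 0..x (Suc k)} (\<lambda>t. poly r t) = (\<Sum>j\<le>Suc k. Aw j * poly r (x j))"
  shows "(\<Sum>j\<le>k. (poly q (x 0) + (\<Sum>l\<le>j. Aw l * poly (pderiv q) (x l))) * integral {x j..x (Suc j)} (\<lambda>t. poly p t))
       = (\<Sum>j\<le>k. (poly p (x 0) + (\<Sum>l\<le>j. Aw l * poly (pderiv p) (x l))) * integral {x j..x (Suc j)} (\<lambda>t. poly q t))"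
proof -
  define a b where "a = x 0" and "b = x (Suc k)"
  have ab: "a \<le> b"
  proof -
    have "\<forall>j\<le>Suc k. x 0 \<le> x j"
    proof (intro allI impI)
      fix j assume "j \<le> Suc k" then show "x 0 \<le> x j"
      proof (induction j)
        case (Suc j) then show ?case using mono by (meson Suc_leD Suc_le_mono order.trans)
      qed simp
    qed
    then show ?thesis unfolding a_def b_def by simp
  qed
  define P Q where "P = pint p" and "Q = pint q"
  define VP VQ where "VP = [:poly P b:] - P" and "VQ = [:poly Q b:] - Q"
  define X where "X = pderiv q * VP - pderiv p * VQ"
  define Y where "Y = pderiv q * P - pderiv p * Q"
  have X_eq: "X = smult (poly P b) (pderiv q) - smult (poly Q b) (pderiv p) - Y"
    unfolding X_def Y_def VP_def VQ_def by (simp add: algebra_simps)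
  have dq': "degree (pderiv q) \<le> k - 1" and dp': "degree (pderiv p) \<le> k - 1"
    using dp dq by (auto simp: degree_pderiv)
  have dP: "degree P \<le> k + 1" and dQ: "degree Q \<le> k + 1"
    unfolding P_def Q_def using degree_pint[of p] degree_pint[of q] dp dq by auto
  have kk: "2 * k = (k - 1) + (k + 1)" using k1 by simp
  have dY: "degree Y \<le> 2 * k"
  proof -
    have "degree (pderiv q * P) \<le> (k - 1) + (k + 1)"
      by (rule order.trans[OF degree_mult_le]) (intro add_mono dq' dP)
    moreover have "degree (pderiv p * Q) \<le> (k - 1) + (k + 1)"
      by (rule order.trans[OF degree_mult_le]) (intro add_mono dp' dQ)
    ultimately show ?thesis unfolding Y_def kk
      by (intro degree_diff_le)
  qed
  have cY: "coeff Y (2 * k) = 0"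
  proof -
    have "coeff Y (2 * k) = coeff (pderiv q) (k - 1) * coeff P (k + 1) - coeff (pderiv p) (k - 1) * coeff Q (k + 1)"
      unfolding Y_def coeff_diff kk
      using coeff_mult_bound[OF dq' dP] coeff_mult_bound[OF dp' dQ] by simp
    also have "\<dots> = 0"
      using k1 unfolding P_def Q_def by (simp add: coeff_pderiv coeff_pint_Suc)
    finally show ?thesis .
  qed
  have dX0: "degree X \<le> 2 * k"
    unfolding X_eq
    by (intro degree_diff_le dY order.trans[OF degree_smult_le])
       (use dq' dp' in auto)
  have cX: "coeff X (2 * k) = 0"
  proof -
    have "coeff (pderiv q) (2 * k) = 0" "coeff (pderiv p) (2 * k) = 0"
      using dq' dp' k1 by (auto intro!: coeff_eq_0)
    then show ?thesis unfolding X_eq using cY by simp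
  qed
  have dX: "degree X \<le> 2 * k - 1"
    using degree_drop[of X "2 * k - 1"] dX0 cX k1 by simp
  define H where "H = q * VP - p * VQ"
  have dH: "pderiv H = X"
    unfolding H_def X_def VP_def VQ_def
    by (simp add: pderiv_mult pderiv_diff pderiv_add pderiv_smult P_def Q_def pderiv_pint pderiv_pCons algebra_simps)
  have "(\<Sum>j\<le>Suc k. Aw j * poly X (x j)) = integral {a..b} (\<lambda>t. poly X t)"
    using exact dX unfolding a_def b_def by simp
  also have "\<dots> = poly H b - poly H a" using ftc_poly[OF ab, of H] dH by simp
  also have "\<dots> = - (poly q a * poly VP a - poly p a * poly VQ a)"
    unfolding H_def VP_def VQ_def by simp
  finally have key: "(\<Sum>j\<le>Suc k. Aw j * poly X (x j)) = - (poly q a * poly VP a - poly p a * poly VQ a)" .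
  have "(\<Sum>j\<le>Suc k. Aw j * poly X (x j)) = (\<Sum>j\<le>Suc k. Aw j * poly (pderiv q * VP) (x j)) - (\<Sum>j\<le>Suc k. Aw j * poly (pderiv p * VQ) (x j))"
    unfolding X_def sum_subtractf[symmetric] by (intro sum.cong) (auto simp: algebra_simps)
  with key show ?thesis
    unfolding cell_value[OF mono] VP_def VQ_def P_def Q_def a_def b_def by simp
qed

lemma ip_sym:
  assumes sub_left: "\<forall>i<N. xs i 0 = xh i"
    and sub_right: "\<forall>i<N. xs i (Suc k) = xh (Suc i)"
    and sub_mono: "\<forall>i<N. \<forall>j\<le>k. xs i j < xs i (Suc j)"
    and k_pos: "k \<ge> 1"
    and quad_exact: "\<forall>i<N. \<forall>p :: real poly. degree p \<le> 2 * k - 1 \<longrightarrow>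
                        integral {xh i..xh (Suc i)} (\<lambda>x. poly p x) = quad k A xs i (\<lambda>x. poly p x)"
    and v: "inV k N v" and w: "inV k N w"
  shows "ip_star N k A xs xh v w = ip_star N k A xs xh w v"
  unfolding ip_star_def mstar_def
proof (rule sum.cong[OF refl])
  fix i assume "i \<in> {..<N}"
  then have i: "i < N" by simp
  have e: "\<forall>r :: real poly. degree r \<le> 2 * k - 1 \<longrightarrow>
        integral {xs i 0..xs i (Suc k)} (\<lambda>t. poly r t) = (\<Sum>j\<le>Suc k. A i j * poly r (xs i j))"
    using quad_exact i sub_left sub_right by (simp add: quad_def)
  have m: "\<forall>j\<le>k. xs i j \<le> xs i (Suc j)" using sub_mono i by (simp add: less_imp_le)
  show "(\<Sum>j\<le>k. (poly (w i) (xh i) + (\<Sum>l\<le>j. A i l * poly (pderiv (w i)) (xs i l))) * integral {xs i j..xs i (Suc j)} (poly (v i))) =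
        (\<Sum>j\<le>k. (poly (v i) (xh i) + (\<Sum>l\<le>j. A i l * poly (pderiv (v i)) (xs i l))) * integral {xs i j..xs i (Suc j)} (poly (w i)))"
    using cell_sym[OF m k_pos _ _ e, of "v i" "w i"] v w i sub_left unfolding inV_def by simp
qed

lemma ip_lin1:
  assumes "finite S"
  shows "ip_star N k A xs xh (\<lambda>i. \<Sum>p\<in>S. smult (a p) (f p i)) w = (\<Sum>p\<in>S. a p * ip_star N k A xs xh (f p) w)"
proof -
  have "integral {xs i j..xs i (Suc j)} (\<lambda>x. poly (\<Sum>p\<in>S. smult (a p) (f p i)) x)
      = (\<Sum>p\<in>S. a p * integral {xs i j..xs i (Suc j)} (\<lambda>x. poly (f p i) x))" for i j
  proof -
    have "integral {xs i j..xs i (Suc j)} (\<lambda>x. poly (\<Sum>p\<in>S. smult (a p) (f p i)) x)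
        = integral {xs i j..xs i (Suc j)} (\<lambda>x. \<Sum>p\<in>S. a p * poly (f p i) x)"
      by (simp add: poly_sum)
    also have "\<dots> = (\<Sum>p\<in>S. integral {xs i j..xs i (Suc j)} (\<lambda>x. a p * poly (f p i) x))"
      by (rule integral_sum[OF assms]) (auto intro!: integrable_continuous_interval continuous_intros)
    also have "\<dots> = (\<Sum>p\<in>S. a p * integral {xs i j..xs i (Suc j)} (\<lambda>x. poly (f p i) x))"
      by simp
    finally show ?thesis .
  qed
  then show ?thesis
    unfolding ip_star_def
    by (simp add: sum_distrib_left sum_distrib_right algebra_simps sum.swap[of _ S])
qed

lemma Hsym:
  assumes N_pos: "N \<ge> 1"
    and cells: "\<forall>i<N. xh i < xh (Suc i)"
    and k_pos: "k \<ge> 1"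
    and quad_exact: "\<forall>i<N. \<forall>p :: real poly. degree p \<le> 2 * k - 1 \<longrightarrow>
                        integral {xh i..xh (Suc i)} (\<lambda>x. poly p x) = quad k A xs i (\<lambda>x. poly p x)"
    and v: "inV k N v" and w: "inV k N w"
  shows "Hstar N k A xs xh \<beta> v w + Hstar N k A xs xh \<beta> w v = - \<beta> * jump_ip N xh v w"
proof -
  have q: "quad k A xs i (\<lambda>x. poly (v i) x * poly (pderiv (w i)) x) + quad k A xs i (\<lambda>x. poly (w i) x * poly (pderiv (v i)) x)
      = poly (v i * w i) (xh (Suc i)) - poly (v i * w i) (xh i)" if i: "i < N" for i
  proof -
    have "quad k A xs i (\<lambda>x. poly (v i) x * poly (pderiv (w i)) x) + quad k A xs i (\<lambda>x. poly (w i) x * poly (pderiv (v i)) x)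
        = quad k A xs i (\<lambda>x. poly (pderiv (v i * w i)) x)"
      unfolding quad_def by (simp add: pderiv_mult sum.distrib[symmetric] algebra_simps)
    also have "\<dots> = integral {xh i..xh (Suc i)} (\<lambda>x. poly (pderiv (v i * w i)) x)"
    proof -
      have "degree (v i * w i) \<le> k + k"
        using v w i unfolding inV_def by (intro order.trans[OF degree_mult_le] add_mono) auto
      then have "degree (pderiv (v i * w i)) \<le> 2 * k - 1" by (simp add: degree_pderiv)
      then show ?thesis using quad_exact i by simp
    qed
    also have "\<dots> = poly (v i * w i) (xh (Suc i)) - poly (v i * w i) (xh i)"
      using cells i by (intro ftc_poly) (simp add: less_imp_le)
    finally show ?thesis .
  qed
  have sh: "(\<Sum>i<N. poly (v i * w i) (xh i)) = (\<Sum>i<N. poly (v (Suc i mod N) * w (Suc i mod N)) (xh (Suc i mod N)))"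
    using sum_mod_shift[OF N_pos, of "\<lambda>i. poly (v i * w i) (xh i)"] by simp
  have "Hstar N k A xs xh \<beta> v w + Hstar N k A xs xh \<beta> w v
     = \<beta> * ((\<Sum>i<N. poly (v i * w i) (xh (Suc i))) - (\<Sum>i<N. poly (v i * w i) (xh i))
         + (\<Sum>i<N. poly (v i) (xh (Suc i)) * jump N xh w i + poly (w i) (xh (Suc i)) * jump N xh v i))"
  proof -
    have E: "(\<Sum>i<N. quad k A xs i (\<lambda>x. poly (v i) x * poly (pderiv (w i)) x)) + (\<Sum>i<N. quad k A xs i (\<lambda>x. poly (w i) x * poly (pderiv (v i)) x))
        = (\<Sum>i<N. poly (v i * w i) (xh (Suc i))) - (\<Sum>i<N. poly (v i * w i) (xh i))"
      unfolding sum.distrib[symmetric] sum_subtractf[symmetric] using q by (intro sum.cong) auto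
    have "Hstar N k A xs xh \<beta> v w + Hstar N k A xs xh \<beta> w v
       = \<beta> * (((\<Sum>i<N. quad k A xs i (\<lambda>x. poly (v i) x * poly (pderiv (w i)) x)) + (\<Sum>i<N. quad k A xs i (\<lambda>x. poly (w i) x * poly (pderiv (v i)) x)))
          + (\<Sum>i<N. poly (v i) (xh (Suc i)) * jump N xh w i + poly (w i) (xh (Suc i)) * jump N xh v i))"
      unfolding Hstar_def sum.distrib by (simp only: distrib_left add_ac)
    then show ?thesis unfolding E .
  qed
  also have "\<dots> = - \<beta> * jump_ip N xh v w"
    unfolding sh jump_ip_def
    by (simp add: sum_subtractf[symmetric] sum.distrib[symmetric] sum_negf[symmetric] sum_distrib_left jump_def algebra_simps)
  finally show ?thesis .
qed

lemma double_delta: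
  fixes p q s :: nat
  assumes "p < s" "q < s"
  shows "(\<Sum>\<kappa><s. \<Sum>\<kappa>0<s. (if \<kappa> = p \<and> \<kappa>0 = q then c else 0) * (f \<kappa> \<kappa>0 :: real)) = c * f p q"
proof -
  have i: "(\<Sum>\<kappa>0<s. (if \<kappa> = p \<and> \<kappa>0 = q then c else 0) * f \<kappa> \<kappa>0) = (if \<kappa> = p then c * f p q else 0)" for \<kappa>
  proof (cases "\<kappa> = p")
    case True
    have "(\<Sum>\<kappa>0<s. (if \<kappa> = p \<and> \<kappa>0 = q then c else 0) * f \<kappa> \<kappa>0) = (\<Sum>\<kappa>0<s. if \<kappa>0 = q then c * f p \<kappa>0 else 0)"
      using True by (intro sum.cong) auto
    also have "\<dots> = c * f p q" using assms(2) by (subst sum.delta) auto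
    finally show ?thesis using True by simp
  qed simp
  show ?thesis unfolding i using assms(1) by (subst sum.delta) auto
qed

definition good :: "real \<Rightarrow> nat \<Rightarrow> nat \<Rightarrow> nat \<Rightarrow> bool" where
  "good t s p q \<longleftrightarrow> (\<exists>E G. E 0 = (if p = 0 \<and> q = 0 then 1 else (0::real)) \<and>
     (\<forall>B g :: nat \<Rightarrow> nat \<Rightarrow> real. (\<forall>a b. B a b = B b a) \<and> (\<forall>a b. B (Suc a) b + B a (Suc b) = - t * g a b) \<longrightarrow>
        B p q = (\<Sum>\<kappa>\<le>s. E \<kappa> * B \<kappa> \<kappa>) - t * (\<Sum>\<kappa><s. \<Sum>\<kappa>0<s. G \<kappa> \<kappa>0 * g \<kappa> \<kappa>0)))"

lemma reduce_ord: "q = p + d \<Longrightarrow> q \<le> s \<Longrightarrow> good t s p q"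
proof (induction d arbitrary: p q rule: nat_less_induct)
  case (1 d)
  show ?case
  proof (cases d)
    case 0
    then have pq: "q = p" using 1 by simp
    show ?thesis unfolding good_def
    proof (intro exI conjI allI impI)
      show "(\<lambda>\<kappa>. if \<kappa> = p then 1 else 0) 0 = (if p = 0 \<and> q = 0 then 1 else (0::real))" using pq by simp
      fix B g :: "nat \<Rightarrow> nat \<Rightarrow> real"
      show "B p q = (\<Sum>\<kappa>\<le>s. (\<lambda>\<kappa>. if \<kappa> = p then 1 else 0) \<kappa> * B \<kappa> \<kappa>) - t * (\<Sum>\<kappa><s. \<Sum>\<kappa>0<s. (\<lambda>_ _. 0) \<kappa> \<kappa>0 * g \<kappa> \<kappa>0)"
        using pq 1(3) by (subst sum.cong[OF refl, of _ _ "\<lambda>\<kappa>. if \<kappa> = p then B \<kappa> \<kappa> else 0"]) auto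
    qed
  next
    case (Suc d')
    show ?thesis
    proof (cases d')
      case 0
      then have pq: "q = Suc p" using 1 Suc by simp
      show ?thesis unfolding good_def
      proof (intro exI conjI allI impI)
        show "(\<lambda>_. 0) 0 = (if p = 0 \<and> q = 0 then 1 else (0::real))" using pq by simp
        fix B g :: "nat \<Rightarrow> nat \<Rightarrow> real"
        assume h: "(\<forall>a b. B a b = B b a) \<and> (\<forall>a b. B (Suc a) b + B a (Suc b) = - t * g a b)"
        have ps: "p < s" using pq 1(3) by simp
        have e1: "B (Suc p) p + B p (Suc p) = - t * g p p" using h by blast
        have e2: "B (Suc p) p = B p (Suc p)" using h by blast
        have "B p q = - t * g p p / 2" unfolding pq using e1 e2 by linarith
        also have "\<dots> = (\<Sum>\<kappa>\<le>s. (\<lambda>_. 0) \<kappa> * B \<kappa> \<kappa>) - t * (\<Sum>\<kappa><s. \<Sum>\<kappa>0<s. (\<lambda>a b. if a = p \<and> b = p then 1/2 else 0) \<kappa> \<kappa>0 * g \<kappa> \<kappa>0)"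
          using double_delta[OF ps ps, of "1/2" g] by simp
        finally show "B p q = (\<Sum>\<kappa>\<le>s. (\<lambda>_. 0) \<kappa> * B \<kappa> \<kappa>) - t * (\<Sum>\<kappa><s. \<Sum>\<kappa>0<s. (\<lambda>a b. if a = p \<and> b = p then 1/2 else 0) \<kappa> \<kappa>0 * g \<kappa> \<kappa>0)" .
      qed
    next
      case (Suc d'')
      have dd: "d = Suc (Suc d'')" using \<open>d = Suc d'\<close> Suc by simp
      obtain q' where q': "q = Suc q'" using 1(2) dd by (cases q) auto
      have "good t s (Suc p) q'" using 1(1)[rule_format, of d'' q' "Suc p"] 1(2,3) dd q' by simp
      then obtain E G where EG: "E 0 = (if Suc p = 0 \<and> q' = 0 then 1 else (0::real))"
        "\<forall>B g :: nat \<Rightarrow> nat \<Rightarrow> real. (\<forall>a b. B a b = B b a) \<and> (\<forall>a b. B (Suc a) b + B a (Suc b) = - t * g a b) \<longrightarrow>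
        B (Suc p) q' = (\<Sum>\<kappa>\<le>s. E \<kappa> * B \<kappa> \<kappa>) - t * (\<Sum>\<kappa><s. \<Sum>\<kappa>0<s. G \<kappa> \<kappa>0 * g \<kappa> \<kappa>0)"
        unfolding good_def by blast
      have ps: "p < s" "q' < s" using 1(2,3) dd q' by auto
      show ?thesis unfolding good_def
      proof (intro exI conjI allI impI)
        show "(\<lambda>\<kappa>. - E \<kappa>) 0 = (if p = 0 \<and> q = 0 then 1 else (0::real))" using EG(1) q' by simp
        fix B g :: "nat \<Rightarrow> nat \<Rightarrow> real"
        assume h: "(\<forall>a b. B a b = B b a) \<and> (\<forall>a b. B (Suc a) b + B a (Suc b) = - t * g a b)"
        have e1: "B (Suc p) q' + B p (Suc q') = - t * g p q'" using h by blast
        have r: "B p q = - B (Suc p) q' - t * g p q'" unfolding q' using e1 by linarith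
        have gs: "(\<Sum>\<kappa><s. \<Sum>\<kappa>0<s. (if \<kappa> = p \<and> \<kappa>0 = q' then 1 else 0) * g \<kappa> \<kappa>0) = g p q'"
          using double_delta[OF ps, of 1 g] by simp
        have "B p q = (\<Sum>\<kappa>\<le>s. (- E \<kappa>) * B \<kappa> \<kappa>)
            - t * (\<Sum>\<kappa><s. \<Sum>\<kappa>0<s. (- G \<kappa> \<kappa>0 + (if \<kappa> = p \<and> \<kappa>0 = q' then 1 else 0)) * g \<kappa> \<kappa>0)"
          unfolding r EG(2)[rule_format, OF h] distrib_right sum.distrib gs
          by (simp add: sum_negf algebra_simps)
        then show "B p q = (\<Sum>\<kappa>\<le>s. (\<lambda>\<kappa>. - E \<kappa>) \<kappa> * B \<kappa> \<kappa>)
            - t * (\<Sum>\<kappa><s. \<Sum>\<kappa>0<s. (\<lambda>a b. - G a b + (if a = p \<and> b = q' then 1 else 0)) \<kappa> \<kappa>0 * g \<kappa> \<kappa>0)" by simp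
      qed
    qed
  qed
qed

lemma reduce: "p \<le> s \<Longrightarrow> q \<le> s \<Longrightarrow> good t s p q"
proof (cases "p \<le> q")
  case True
  assume "q \<le> s" then show ?thesis using reduce_ord[of q p "q - p"] True by simp
next
  case False
  assume "p \<le> s"
  then have "good t s q p" using reduce_ord[of p q "p - q"] False by simp
  then obtain E G where EG: "E 0 = (if q = 0 \<and> p = 0 then 1 else (0::real))"
    "\<forall>B g :: nat \<Rightarrow> nat \<Rightarrow> real. (\<forall>a b. B a b = B b a) \<and> (\<forall>a b. B (Suc a) b + B a (Suc b) = - t * g a b) \<longrightarrow>
        B q p = (\<Sum>\<kappa>\<le>s. E \<kappa> * B \<kappa> \<kappa>) - t * (\<Sum>\<kappa><s. \<Sum>\<kappa>0<s. G \<kappa> \<kappa>0 * g \<kappa> \<kappa>0)"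
    unfolding good_def by blast
  show ?thesis unfolding good_def
  proof (intro exI[of _ E] exI[of _ G] conjI allI impI)
    show "E 0 = (if p = 0 \<and> q = 0 then 1 else (0::real))" using EG(1) by auto
    fix B g :: "nat \<Rightarrow> nat \<Rightarrow> real"
    assume h: "(\<forall>a b. B a b = B b a) \<and> (\<forall>a b. B (Suc a) b + B a (Suc b) = - t * g a b)"
    have "B p q = B q p" using h by blast
    also have "\<dots> = (\<Sum>\<kappa>\<le>s. E \<kappa> * B \<kappa> \<kappa>) - t * (\<Sum>\<kappa><s. \<Sum>\<kappa>0<s. G \<kappa> \<kappa>0 * g \<kappa> \<kappa>0)"
      using EG(2)[rule_format, OF h] .
    finally show "B p q = (\<Sum>\<kappa>\<le>s. E \<kappa> * B \<kappa> \<kappa>) - t * (\<Sum>\<kappa><s. \<Sum>\<kappa>0<s. G \<kappa> \<kappa>0 * g \<kappa> \<kappa>0)" .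
  qed
qed

lemma rk_len: "length (rk_polys c d n) = Suc n"
  by (induction n) auto

lemma rk_nth: "m \<le> n \<Longrightarrow> rk_polys c d n ! m = rk_poly c d m"
proof (induction n)
  case 0 then show ?case by (simp add: rk_poly_def)
next
  case (Suc n)
  show ?case
  proof (cases "m \<le> n")
    case True then show ?thesis using Suc by (simp add: nth_append rk_len)
  next
    case False then have "m = Suc n" using Suc by simp
    then show ?thesis by (simp add: rk_poly_def)
  qed
qed

lemma rk_poly_Suc: "rk_poly c d (Suc l) = (\<Sum>\<kappa>\<le>l. [:c l \<kappa>, d l \<kappa>:] * rk_poly c d \<kappa>)"
  by (simp add: rk_poly_def[of c d "Suc l"] nth_append rk_len rk_nth)

lemma rk0:
  assumes "\<forall>l<s. (\<Sum>\<kappa>\<le>l. c l \<kappa>) = 1"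
  shows "n \<le> s \<Longrightarrow> poly (rk_poly c d n) 0 = 1"
proof (induction n rule: nat_less_induct)
  case (1 n)
  show ?case
  proof (cases n)
    case 0 then show ?thesis by (simp add: rk_poly_def)
  next
    case (Suc l)
    have "poly (rk_poly c d n) 0 = (\<Sum>\<kappa>\<le>l. c l \<kappa> * poly (rk_poly c d \<kappa>) 0)"
      unfolding Suc rk_poly_Suc by (simp add: poly_sum)
    also have "\<dots> = (\<Sum>\<kappa>\<le>l. c l \<kappa>)"
      using 1 Suc by (intro sum.cong) auto
    also have "\<dots> = 1" using assms 1(2) Suc by simp
    finally show ?thesis .
  qed
qed

lemma regroup:
  fixes a :: "nat \<Rightarrow> nat \<Rightarrow> real"
  shows "(\<Sum>p\<in>P. \<Sum>q\<in>Q. a p q * ((\<Sum>\<kappa>\<in>K. E p q \<kappa> * X \<kappa>) - t * (\<Sum>\<kappa>\<in>K1. \<Sum>\<kappa>0\<in>K1. G p q \<kappa> \<kappa>0 * Y \<kappa> \<kappa>0)))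
    = (\<Sum>\<kappa>\<in>K. (\<Sum>p\<in>P. \<Sum>q\<in>Q. a p q * E p q \<kappa>) * X \<kappa>)
      - t * (\<Sum>\<kappa>\<in>K1. \<Sum>\<kappa>0\<in>K1. (\<Sum>p\<in>P. \<Sum>q\<in>Q. a p q * G p q \<kappa> \<kappa>0) * Y \<kappa> \<kappa>0)"
proof -
  have 1: "(\<Sum>p\<in>P. \<Sum>q\<in>Q. a p q * (\<Sum>\<kappa>\<in>K. E p q \<kappa> * X \<kappa>)) = (\<Sum>\<kappa>\<in>K. (\<Sum>p\<in>P. \<Sum>q\<in>Q. a p q * E p q \<kappa>) * X \<kappa>)"
  proof -
    have "(\<Sum>p\<in>P. \<Sum>q\<in>Q. a p q * (\<Sum>\<kappa>\<in>K. E p q \<kappa> * X \<kappa>)) = (\<Sum>p\<in>P. \<Sum>q\<in>Q. \<Sum>\<kappa>\<in>K. a p q * E p q \<kappa> * X \<kappa>)"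
      by (simp add: sum_distrib_left mult.assoc)
    also have "\<dots> = (\<Sum>p\<in>P. \<Sum>\<kappa>\<in>K. \<Sum>q\<in>Q. a p q * E p q \<kappa> * X \<kappa>)"
      by (rule sum.cong[OF refl], rule sum.swap)
    also have "\<dots> = (\<Sum>\<kappa>\<in>K. \<Sum>p\<in>P. \<Sum>q\<in>Q. a p q * E p q \<kappa> * X \<kappa>)"
      by (rule sum.swap)
    also have "\<dots> = (\<Sum>\<kappa>\<in>K. (\<Sum>p\<in>P. \<Sum>q\<in>Q. a p q * E p q \<kappa>) * X \<kappa>)"
      by (simp add: sum_distrib_right)
    finally show ?thesis .
  qed
  have 2: "(\<Sum>p\<in>P. \<Sum>q\<in>Q. a p q * (\<Sum>\<kappa>\<in>K1. \<Sum>\<kappa>0\<in>K1. G p q \<kappa> \<kappa>0 * Y \<kappa> \<kappa>0))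
     = (\<Sum>\<kappa>\<in>K1. \<Sum>\<kappa>0\<in>K1. (\<Sum>p\<in>P. \<Sum>q\<in>Q. a p q * G p q \<kappa> \<kappa>0) * Y \<kappa> \<kappa>0)"
  proof -
    have "(\<Sum>p\<in>P. \<Sum>q\<in>Q. a p q * (\<Sum>\<kappa>\<in>K1. \<Sum>\<kappa>0\<in>K1. G p q \<kappa> \<kappa>0 * Y \<kappa> \<kappa>0))
        = (\<Sum>p\<in>P. \<Sum>q\<in>Q. \<Sum>\<kappa>\<in>K1. \<Sum>\<kappa>0\<in>K1. a p q * G p q \<kappa> \<kappa>0 * Y \<kappa> \<kappa>0)"
      by (simp add: sum_distrib_left mult.assoc)
    also have "\<dots> = (\<Sum>p\<in>P. \<Sum>\<kappa>\<in>K1. \<Sum>q\<in>Q. \<Sum>\<kappa>0\<in>K1. a p q * G p q \<kappa> \<kappa>0 * Y \<kappa> \<kappa>0)"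
      by (rule sum.cong[OF refl], rule sum.swap)
    also have "\<dots> = (\<Sum>p\<in>P. \<Sum>\<kappa>\<in>K1. \<Sum>\<kappa>0\<in>K1. \<Sum>q\<in>Q. a p q * G p q \<kappa> \<kappa>0 * Y \<kappa> \<kappa>0)"
      by (rule sum.cong[OF refl], rule sum.cong[OF refl], rule sum.swap)
    also have "\<dots> = (\<Sum>\<kappa>\<in>K1. \<Sum>p\<in>P. \<Sum>\<kappa>0\<in>K1. \<Sum>q\<in>Q. a p q * G p q \<kappa> \<kappa>0 * Y \<kappa> \<kappa>0)"
      by (rule sum.swap)
    also have "\<dots> = (\<Sum>\<kappa>\<in>K1. \<Sum>\<kappa>0\<in>K1. \<Sum>p\<in>P. \<Sum>q\<in>Q. a p q * G p q \<kappa> \<kappa>0 * Y \<kappa> \<kappa>0)"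
      by (rule sum.cong[OF refl], rule sum.swap)
    also have "\<dots> = (\<Sum>\<kappa>\<in>K1. \<Sum>\<kappa>0\<in>K1. (\<Sum>p\<in>P. \<Sum>q\<in>Q. a p q * G p q \<kappa> \<kappa>0) * Y \<kappa> \<kappa>0)"
      by (simp add: sum_distrib_right)
    finally show ?thesis .
  qed
  define S1 where "S1 p q = (\<Sum>\<kappa>\<in>K. E p q \<kappa> * X \<kappa>)" for p q
  define S2 where "S2 p q = (\<Sum>\<kappa>\<in>K1. \<Sum>\<kappa>0\<in>K1. G p q \<kappa> \<kappa>0 * Y \<kappa> \<kappa>0)" for p q
  have "(\<Sum>p\<in>P. \<Sum>q\<in>Q. a p q * (S1 p q - t * S2 p q)) = (\<Sum>p\<in>P. \<Sum>q\<in>Q. a p q * S1 p q - t * (a p q * S2 p q))"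
    by (intro sum.cong refl) (simp add: algebra_simps)
  also have "\<dots> = (\<Sum>p\<in>P. \<Sum>q\<in>Q. a p q * S1 p q) - (\<Sum>p\<in>P. \<Sum>q\<in>Q. t * (a p q * S2 p q))"
    by (simp only: sum_subtractf)
  also have "(\<Sum>p\<in>P. \<Sum>q\<in>Q. t * (a p q * S2 p q)) = t * (\<Sum>p\<in>P. \<Sum>q\<in>Q. a p q * S2 p q)"
    by (simp only: sum_distrib_left)
  finally show ?thesis unfolding S1_def S2_def 1 2 .
qed

theorem proposition4p9:
  fixes N k s :: nat
    and xh :: "nat \<Rightarrow> real" and xs A :: "nat \<Rightarrow> nat \<Rightarrow> real"
    and c d :: "nat \<Rightarrow> nat \<Rightarrow> real" and \<tau> \<beta> :: real
    and D :: "(nat \<Rightarrow> real poly) \<Rightarrow> (nat \<Rightarrow> real poly)"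
  assumes N_pos: "N \<ge> 1"
    and cells: "\<forall>i<N. xh i < xh (Suc i)"
    and sub_left: "\<forall>i<N. xs i 0 = xh i"
    and sub_right: "\<forall>i<N. xs i (Suc k) = xh (Suc i)"
    and sub_mono: "\<forall>i<N. \<forall>j\<le>k. xs i j < xs i (Suc j)"
    \<comment> \<open>Assumption (S)\<close>
    and k_pos: "k \<ge> 1"
    and quad_exact: "\<forall>i<N. \<forall>p :: real poly. degree p \<le> 2 * k - 1 \<longrightarrow>
                        integral {xh i..xh (Suc i)} (\<lambda>x. poly p x) = quad k A xs i (\<lambda>x. poly p x)"
    and S_pos: "\<forall>i<N. (xh (Suc i) - xh i) / (2 * real k - 1)
                   - quad k A xs i (\<lambda>x. shifted_legendre (xh i) (xh (Suc i)) (Suc k) x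
                                       * shifted_legendre (xh i) (xh (Suc i)) (k - 1) x) > 0"
    \<comment> \<open>upwind condition\<close>
    and upwind: "\<forall>i<N. A i 0 = 0"
    and beta_pos: "\<beta> > 0" and tau_pos: "\<tau> > 0"
    \<comment> \<open>explicit s-stage Runge--Kutta method\<close>
    and s_pos: "s \<ge> 1"
    and c_sum: "\<forall>l<s. (\<Sum>\<kappa>\<le>l. c l \<kappa>) = 1"
    \<comment> \<open>the operator D^*\<close>
    and D_maps: "\<forall>v. inV k N v \<longrightarrow> inV k N (D v)"
    and D_def: "\<forall>v w. inV k N v \<longrightarrow> inV k N w \<longrightarrow>
                   ip_star N k A xs xh (D v) w = \<tau> * Hstar N k A xs xh \<beta> v w"
  shows "\<exists>b :: nat \<Rightarrow> real. \<exists>bb :: nat \<Rightarrow> nat \<Rightarrow> real.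
           (\<forall>\<kappa><s. \<forall>\<kappa>0<s. bb \<kappa> \<kappa>0 = bb \<kappa>0 \<kappa>) \<and>
           (\<forall>v. inV k N v \<longrightarrow>
              (let R = (\<lambda>i. \<Sum>\<kappa>\<le>s. smult (coeff (rk_poly c d s) \<kappa>) ((D ^^ \<kappa>) v i))
               in ip_star N k A xs xh R R
                  = ip_star N k A xs xh v v
                    + (\<Sum>\<kappa>=1..s. b \<kappa> * ip_star N k A xs xh ((D ^^ \<kappa>) v) ((D ^^ \<kappa>) v))
                    - \<tau> * (\<Sum>\<kappa><s. \<Sum>\<kappa>0<s. bb \<kappa> \<kappa>0 * jump_ip N xh ((D ^^ \<kappa>) v) ((D ^^ \<kappa>0) v))))"
proof -
  let ?ip = "ip_star N k A xs xh"
  let ?J = "jump_ip N xh"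
  have uV: "inV k N ((D ^^ p) v)" if "inV k N v" for p v
    using that D_maps by (induction p) auto
  have sym: "?ip x y = ?ip y x" if "inV k N x" "inV k N y" for x y
    using ip_sym[OF sub_left sub_right sub_mono k_pos quad_exact that] .
  have rel: "?ip (D x) y + ?ip x (D y) = - \<tau> * (\<beta> * ?J x y)" if x: "inV k N x" and y: "inV k N y" for x y
  proof -
    have "?ip x (D y) = ?ip (D y) x" using sym x y D_maps by blast
    then have "?ip (D x) y + ?ip x (D y) = \<tau> * (Hstar N k A xs xh \<beta> x y + Hstar N k A xs xh \<beta> y x)"
      using D_def x y by (simp add: algebra_simps)
    also have "\<dots> = - \<tau> * (\<beta> * ?J x y)"
      using Hsym[OF N_pos cells k_pos quad_exact x y] by simp
    finally show ?thesis .
  qed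
  have "\<forall>x. \<exists>y. fst x \<le> s \<longrightarrow> snd x \<le> s \<longrightarrow> (fst y 0 = (if fst x = 0 \<and> snd x = 0 then 1 else (0::real)) \<and>
     (\<forall>B g :: nat \<Rightarrow> nat \<Rightarrow> real. (\<forall>a b. B a b = B b a) \<and> (\<forall>a b. B (Suc a) b + B a (Suc b) = - \<tau> * g a b) \<longrightarrow>
        B (fst x) (snd x) = (\<Sum>\<kappa>\<le>s. fst y \<kappa> * B \<kappa> \<kappa>) - \<tau> * (\<Sum>\<kappa><s. \<Sum>\<kappa>0<s. snd y \<kappa> \<kappa>0 * g \<kappa> \<kappa>0)))"
  proof
    fix x :: "nat \<times> nat"
    show "\<exists>y. fst x \<le> s \<longrightarrow> snd x \<le> s \<longrightarrow> (fst y 0 = (if fst x = 0 \<and> snd x = 0 then 1 else (0::real)) \<and>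
     (\<forall>B g :: nat \<Rightarrow> nat \<Rightarrow> real. (\<forall>a b. B a b = B b a) \<and> (\<forall>a b. B (Suc a) b + B a (Suc b) = - \<tau> * g a b) \<longrightarrow>
        B (fst x) (snd x) = (\<Sum>\<kappa>\<le>s. fst y \<kappa> * B \<kappa> \<kappa>) - \<tau> * (\<Sum>\<kappa><s. \<Sum>\<kappa>0<s. snd y \<kappa> \<kappa>0 * g \<kappa> \<kappa>0)))"
    proof (cases "fst x \<le> s \<and> snd x \<le> s")
      case True
      then have "good \<tau> s (fst x) (snd x)" by (intro reduce) auto
      then obtain E G where "E 0 = (if fst x = 0 \<and> snd x = 0 then 1 else (0::real))"
        "\<forall>B g :: nat \<Rightarrow> nat \<Rightarrow> real. (\<forall>a b. B a b = B b a) \<and> (\<forall>a b. B (Suc a) b + B a (Suc b) = - \<tau> * g a b) \<longrightarrow>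
        B (fst x) (snd x) = (\<Sum>\<kappa>\<le>s. E \<kappa> * B \<kappa> \<kappa>) - \<tau> * (\<Sum>\<kappa><s. \<Sum>\<kappa>0<s. G \<kappa> \<kappa>0 * g \<kappa> \<kappa>0)"
        unfolding good_def by blast
      then show ?thesis apply (intro exI[of _ "(E, G)"]) unfolding fst_conv snd_conv by blast
    qed auto
  qed
  then obtain f where f: "\<forall>x. fst x \<le> s \<longrightarrow> snd x \<le> s \<longrightarrow> (fst (f x) 0 = (if fst x = 0 \<and> snd x = 0 then 1 else (0::real)) \<and>
     (\<forall>B g :: nat \<Rightarrow> nat \<Rightarrow> real. (\<forall>a b. B a b = B b a) \<and> (\<forall>a b. B (Suc a) b + B a (Suc b) = - \<tau> * g a b) \<longrightarrow>
        B (fst x) (snd x) = (\<Sum>\<kappa>\<le>s. fst (f x) \<kappa> * B \<kappa> \<kappa>) - \<tau> * (\<Sum>\<kappa><s. \<Sum>\<kappa>0<s. snd (f x) \<kappa> \<kappa>0 * g \<kappa> \<kappa>0)))"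
    by (rule choice[THEN exE])
  define EE where "EE p q = fst (f (p, q))" for p q
  define GG where "GG p q = snd (f (p, q))" for p q
  have EE0: "EE p q 0 = (if p = 0 \<and> q = 0 then 1 else 0)" if "p \<le> s" "q \<le> s" for p q
    using f that unfolding EE_def by auto
  have red: "B p q = (\<Sum>\<kappa>\<le>s. EE p q \<kappa> * B \<kappa> \<kappa>) - \<tau> * (\<Sum>\<kappa><s. \<Sum>\<kappa>0<s. GG p q \<kappa> \<kappa>0 * g \<kappa> \<kappa>0)"
    if "p \<le> s" "q \<le> s" "\<forall>a b. B a b = B b a" "\<forall>a b. B (Suc a) b + B a (Suc b) = - \<tau> * g a b" for p q B g
    using f that unfolding EE_def GG_def by auto
  define \<alpha> where "\<alpha> \<kappa> = coeff (rk_poly c d s) \<kappa>" for \<kappa>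
  have \<alpha>0: "\<alpha> 0 = 1" unfolding \<alpha>_def using rk0[OF c_sum, of s d] by (simp add: poly_0_coeff_0)
  define b where "b \<kappa> = (\<Sum>p\<le>s. \<Sum>q\<le>s. \<alpha> p * \<alpha> q * EE q p \<kappa>)" for \<kappa>
  define G' where "G' \<kappa> \<kappa>0 = (\<Sum>p\<le>s. \<Sum>q\<le>s. \<alpha> p * \<alpha> q * GG q p \<kappa> \<kappa>0)" for \<kappa> \<kappa>0
  define bb where "bb \<kappa> \<kappa>0 = \<beta> * (G' \<kappa> \<kappa>0 + G' \<kappa>0 \<kappa>) / 2" for \<kappa> \<kappa>0
  have b0: "b 0 = 1"
  proof -
    have "b 0 = (\<Sum>p\<le>s. \<Sum>q\<le>s. \<alpha> p * \<alpha> q * (if q = 0 \<and> p = 0 then 1 else 0))"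
      unfolding b_def by (intro sum.cong refl) (simp add: EE0)
    also have "\<dots> = (\<Sum>p\<le>s. \<Sum>q\<le>s. (if p = 0 then \<alpha> p else 0) * (if q = 0 then \<alpha> q else 0))"
      by (intro sum.cong refl) auto
    also have "\<dots> = (\<Sum>p\<le>s. if p = 0 then \<alpha> p else 0) * (\<Sum>q\<le>s. if q = 0 then \<alpha> q else 0)"
      by (rule sum_product[symmetric])
    also have "\<dots> = \<alpha> 0 * \<alpha> 0" by simp
    finally show ?thesis using \<alpha>0 by simp
  qed
  show ?thesis
  proof (intro exI[of _ b] exI[of _ bb] conjI allI impI)
    fix \<kappa> \<kappa>0 :: nat
    show "bb \<kappa> \<kappa>0 = bb \<kappa>0 \<kappa>" unfolding bb_def by (simp add: add.commute)
  next
    fix v assume v: "inV k N v"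
    define u where "u p = (D ^^ p) v" for p
    have uV': "inV k N (u p)" for p unfolding u_def using uV[OF v] .
    define R where "R = (\<lambda>i. \<Sum>\<kappa>\<le>s. smult (\<alpha> \<kappa>) (u \<kappa> i))"
    have RV: "inV k N R"
      unfolding inV_def R_def
    proof (intro allI impI)
      fix i assume "i < N"
      then have "\<forall>\<kappa>. degree (u \<kappa> i) \<le> k" using uV' unfolding inV_def by blast
      then show "degree (\<Sum>\<kappa>\<le>s. smult (\<alpha> \<kappa>) (u \<kappa> i)) \<le> k"
        by (intro degree_sum_le) (auto intro: order.trans[OF degree_smult_le])
    qed
    define B where "B p q = ?ip (u p) (u q)" for p q
    define g where "g p q = \<beta> * ?J (u p) (u q)" for p q
    have Bsym: "\<forall>a b. B a b = B b a" unfolding B_def using sym uV' by blast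
    have Brel: "\<forall>a b. B (Suc a) b + B a (Suc b) = - \<tau> * g a b"
      unfolding B_def g_def u_def using rel uV[OF v] by simp
    have "?ip R R = (\<Sum>p\<le>s. \<alpha> p * ?ip (u p) R)" unfolding R_def[of] by (rule ip_lin1) simp
    also have "\<dots> = (\<Sum>p\<le>s. \<alpha> p * ?ip R (u p))" using sym[OF uV' RV] by simp
    also have "\<dots> = (\<Sum>p\<le>s. \<Sum>q\<le>s. \<alpha> p * \<alpha> q * B q p)"
      unfolding R_def ip_lin1[OF finite_atMost] B_def by (simp add: sum_distrib_left mult.assoc)
    also have "\<dots> = (\<Sum>p\<le>s. \<Sum>q\<le>s. \<alpha> p * \<alpha> q * ((\<Sum>\<kappa>\<le>s. EE q p \<kappa> * B \<kappa> \<kappa>) - \<tau> * (\<Sum>\<kappa><s. \<Sum>\<kappa>0<s. GG q p \<kappa> \<kappa>0 * g \<kappa> \<kappa>0)))"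
    proof (intro sum.cong refl)
      fix p q assume pq: "p \<in> {..s}" "q \<in> {..s}"
      show "\<alpha> p * \<alpha> q * B q p = \<alpha> p * \<alpha> q * ((\<Sum>\<kappa>\<le>s. EE q p \<kappa> * B \<kappa> \<kappa>) - \<tau> * (\<Sum>\<kappa><s. \<Sum>\<kappa>0<s. GG q p \<kappa> \<kappa>0 * g \<kappa> \<kappa>0))"
        using red[of q p B g, OF _ _ Bsym Brel] pq by simp
    qed
    also have "\<dots> = (\<Sum>\<kappa>\<le>s. b \<kappa> * B \<kappa> \<kappa>) - \<tau> * (\<Sum>\<kappa><s. \<Sum>\<kappa>0<s. G' \<kappa> \<kappa>0 * g \<kappa> \<kappa>0)"
      unfolding regroup b_def G'_def ..
    finally have E1: "?ip R R = (\<Sum>\<kappa>\<le>s. b \<kappa> * B \<kappa> \<kappa>) - \<tau> * (\<Sum>\<kappa><s. \<Sum>\<kappa>0<s. G' \<kappa> \<kappa>0 * g \<kappa> \<kappa>0)" .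
    have E2: "(\<Sum>\<kappa>\<le>s. b \<kappa> * B \<kappa> \<kappa>) = B 0 0 + (\<Sum>\<kappa>=1..s. b \<kappa> * B \<kappa> \<kappa>)"
    proof -
      have "{..s} = insert 0 {1..s}" by auto
      then show ?thesis using b0 by simp
    qed
    have E3: "(\<Sum>\<kappa><s. \<Sum>\<kappa>0<s. G' \<kappa> \<kappa>0 * g \<kappa> \<kappa>0) = (\<Sum>\<kappa><s. \<Sum>\<kappa>0<s. bb \<kappa> \<kappa>0 * ?J (u \<kappa>) (u \<kappa>0))"
    proof -
      have Jsym: "?J x y = ?J y x" for x y unfolding jump_ip_def by (simp add: mult.commute)
      have sw: "(\<Sum>\<kappa><s. \<Sum>\<kappa>0<s. G' \<kappa>0 \<kappa> * ?J (u \<kappa>) (u \<kappa>0)) = (\<Sum>\<kappa><s. \<Sum>\<kappa>0<s. G' \<kappa> \<kappa>0 * ?J (u \<kappa>) (u \<kappa>0))"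
        by (subst sum.swap) (simp add: Jsym)
      have "(\<Sum>\<kappa><s. \<Sum>\<kappa>0<s. bb \<kappa> \<kappa>0 * ?J (u \<kappa>) (u \<kappa>0))
          = \<beta> / 2 * ((\<Sum>\<kappa><s. \<Sum>\<kappa>0<s. G' \<kappa> \<kappa>0 * ?J (u \<kappa>) (u \<kappa>0)) + (\<Sum>\<kappa><s. \<Sum>\<kappa>0<s. G' \<kappa>0 \<kappa> * ?J (u \<kappa>) (u \<kappa>0)))"
      proof -
        have "(\<Sum>\<kappa><s. \<Sum>\<kappa>0<s. bb \<kappa> \<kappa>0 * ?J (u \<kappa>) (u \<kappa>0))
           = (\<Sum>\<kappa><s. \<Sum>\<kappa>0<s. \<beta> / 2 * (G' \<kappa> \<kappa>0 * ?J (u \<kappa>) (u \<kappa>0) + G' \<kappa>0 \<kappa> * ?J (u \<kappa>) (u \<kappa>0)))"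
          unfolding bb_def by (intro sum.cong refl) (simp add: field_simps)
        also have "\<dots> = \<beta> / 2 * (\<Sum>\<kappa><s. \<Sum>\<kappa>0<s. G' \<kappa> \<kappa>0 * ?J (u \<kappa>) (u \<kappa>0) + G' \<kappa>0 \<kappa> * ?J (u \<kappa>) (u \<kappa>0))"
          by (simp only: sum_distrib_left)
        also have "\<dots> = \<beta> / 2 * ((\<Sum>\<kappa><s. \<Sum>\<kappa>0<s. G' \<kappa> \<kappa>0 * ?J (u \<kappa>) (u \<kappa>0)) + (\<Sum>\<kappa><s. \<Sum>\<kappa>0<s. G' \<kappa>0 \<kappa> * ?J (u \<kappa>) (u \<kappa>0)))"
          by (simp only: sum.distrib)
        finally show ?thesis .
      qed
      also have "\<dots> = (\<Sum>\<kappa><s. \<Sum>\<kappa>0<s. G' \<kappa> \<kappa>0 * g \<kappa> \<kappa>0)"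
      proof -
        have "\<beta> / 2 * (X + X) = \<beta> * X" for X :: real by simp
        moreover have "\<beta> * (\<Sum>\<kappa><s. \<Sum>\<kappa>0<s. G' \<kappa> \<kappa>0 * ?J (u \<kappa>) (u \<kappa>0)) = (\<Sum>\<kappa><s. \<Sum>\<kappa>0<s. G' \<kappa> \<kappa>0 * g \<kappa> \<kappa>0)"
          unfolding g_def sum_distrib_left by (intro sum.cong refl) (simp only: mult.left_commute)
        ultimately show ?thesis unfolding sw by simp
      qed
      finally show ?thesis by simp
    qed
    have E4: "?ip R R = B 0 0 + (\<Sum>\<kappa>=1..s. b \<kappa> * B \<kappa> \<kappa>) - \<tau> * (\<Sum>\<kappa><s. \<Sum>\<kappa>0<s. bb \<kappa> \<kappa>0 * ?J (u \<kappa>) (u \<kappa>0))"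
      by (simp only: E1 E2 E3)
    have R_eq: "(\<lambda>i. \<Sum>\<kappa>\<le>s. smult (coeff (rk_poly c d s) \<kappa>) ((D ^^ \<kappa>) v i)) = R"
      unfolding R_def \<alpha>_def u_def ..
    show "let R = (\<lambda>i. \<Sum>\<kappa>\<le>s. smult (coeff (rk_poly c d s) \<kappa>) ((D ^^ \<kappa>) v i))
               in ?ip R R = ?ip v v + (\<Sum>\<kappa>=1..s. b \<kappa> * ?ip ((D ^^ \<kappa>) v) ((D ^^ \<kappa>) v))
                    - \<tau> * (\<Sum>\<kappa><s. \<Sum>\<kappa>0<s. bb \<kappa> \<kappa>0 * ?J ((D ^^ \<kappa>) v) ((D ^^ \<kappa>0) v))"
      unfolding Let_def R_eq E4 unfolding B_def u_def funpow_0 ..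
  qed
qed

end
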